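(* Let $\mathcal{L}$ be the generator of a trace preserving quantum dynamical semigroup on $\mathfrak{T}(\mathcal{H})$ which is in generalized standard form with operators $M$ and $L_k$. Define, for $\phi,\psi\in\mathcal{D}(M)$, $\mathcal{M}(|\phi\rangle\langle\psi|)=|M\phi\rangle\langle\psi|+|\phi\rangle\langle M\psi|$ and $\mathcal{L}_+(|\phi\rangle\langle\psi|)=\mathcal{L}(|\phi\rangle\langle\psi|)+\mathcal{M}(|\phi\rangle\langle\psi|)$. Let $\phi,\psi,e,f\in\mathcal{D}(M)$ and $\varepsilon\ge0$ with $\|\phi-e\|,\|M\phi-Me\|,\|\psi-f\|,\|M\psi-Mf\|\le\varepsilon$. Then $$\|\mathcal{M}(|\phi\rangle\langle\psi|)-\mathcal{M}(|e\rangle\langle f|)\|_1\le\varepsilon\,(\|\phi\|+\|M\phi\|+\|\psi\|+\|M\psi\|+2\varepsilon)$$ and $$\|\mathcal{L}_+(|\phi\rangle\langle\psi|)-\mathcal{L}_+(|e\rangle\langle f|)\|_1\le\varepsilon\,(\|\phi\|+\|M\phi\|+\|\psi\|+\|M\psi\|+2\varepsilon).$$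
   Context: $\mathcal{H}$ is a separable Hilbert space, $\mathfrak{T}(\mathcal{H})$ the trace class operators with trace norm $\|\cdot\|_1$. A trace preserving quantum dynamical semigroup is a strongly continuous semigroup of trace preserving completely positive maps on $\mathfrak{T}(\mathcal{H})$ with generator $\mathcal{L}(\rho)=\lim_{t\to0}\frac1t(\mathcal{T}^t(\rho)-\rho)$. Generalized standard form: there are a closed densely defined operator $M$ generating a semigroup on $\mathcal{H}$ and countably many linear operators $L_k$, each relatively bounded with respect to $M$, such that for all $\phi,\psi\in\mathcal{D}(M)$, $|\phi\rangle\langle\psi|\in\mathcal{D}(\mathcal{L})$ and $\mathcal{L}(|\phi\rangle\langle\psi|)=\sum_k|L_k\phi\rangle\langle L_k\psi|-|M\phi\rangle\langle\psi|-|\phi\rangle\langle M\psi|$; $\mathcal{D}(\mathcal{L})$ is the graph-norm closure ($\|\rho\|_1+\|\mathcal{L}\rho\|_1$) of the set $\mathcal{D}_0$ of finite sums of such $|\phi\rangle\langle\psi|$; and $\sum_k\|L_k\phi\|^2=\langle\phi|M\phi\rangle+\langle M\phi|\phi\rangle$ for all $\phi\in\mathcal{D}(M)$. *)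

theory Defs
  imports "HOL-Analysis.Analysis"
begin

text \<open>
  Model of the separable Hilbert space: H = l2(I) for a countable index type I
  (every separable Hilbert space is unitarily equivalent to such a space).
  Operators on H (in particular trace class operators) are represented by their
  matrices with respect to the canonical orthonormal basis:
  entry (i,j) of T is the inner product of e_i with T e_j.
\<close>

type_synonym 'i vec = "'i \<Rightarrow> complex"
type_synonym 'i mat = "'i \<Rightarrow> 'i \<Rightarrow> complex"

definition l2 :: "'i vec set" where
  "l2 = {x. (\<lambda>i. (cmod (x i))\<^sup>2) summable_on UNIV}"

definition l2_norm :: "'i vec \<Rightarrow> real" where
  "l2_norm x = sqrt (\<Sum>\<^sub>\<infinity>i. (cmod (x i))\<^sup>2)"

text \<open>Inner product, antilinear in the first argument (physics convention).\<close>
definition l2_inner :: "'i vec \<Rightarrow> 'i vec \<Rightarrow> complex" where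
  "l2_inner x y = (\<Sum>\<^sub>\<infinity>i. cnj (x i) * y i)"

definition vadd :: "'i vec \<Rightarrow> 'i vec \<Rightarrow> 'i vec" where
  "vadd x y = (\<lambda>i. x i + y i)"

definition vsub :: "'i vec \<Rightarrow> 'i vec \<Rightarrow> 'i vec" where
  "vsub x y = (\<lambda>i. x i - y i)"

definition vscale :: "complex \<Rightarrow> 'i vec \<Rightarrow> 'i vec" where
  "vscale c x = (\<lambda>i. c * x i)"

definition linear_on_l2 :: "'i vec set \<Rightarrow> ('i vec \<Rightarrow> 'i vec) \<Rightarrow> bool" where
  "linear_on_l2 D A \<longleftrightarrow>
     D \<subseteq> l2 \<and> (\<lambda>i. 0) \<in> D \<and>
     (\<forall>x\<in>D. \<forall>y\<in>D. vadd x y \<in> D) \<and> (\<forall>c. \<forall>x\<in>D. vscale c x \<in> D) \<and>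
     (\<forall>x\<in>D. A x \<in> l2) \<and>
     (\<forall>x\<in>D. \<forall>y\<in>D. A (vadd x y) = vadd (A x) (A y)) \<and>
     (\<forall>c. \<forall>x\<in>D. A (vscale c x) = vscale c (A x))"

definition bounded_op_l2 :: "('i vec \<Rightarrow> 'i vec) \<Rightarrow> bool" where
  "bounded_op_l2 A \<longleftrightarrow> linear_on_l2 l2 A \<and> (\<exists>C. \<forall>x\<in>l2. l2_norm (A x) \<le> C * l2_norm x)"

definition c0_semigroup_l2 :: "(real \<Rightarrow> 'i vec \<Rightarrow> 'i vec) \<Rightarrow> bool" where
  "c0_semigroup_l2 S \<longleftrightarrow>
     (\<forall>t\<ge>0. bounded_op_l2 (S t)) \<and>
     (\<forall>x\<in>l2. S 0 x = x) \<and>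
     (\<forall>s\<ge>0. \<forall>t\<ge>0. \<forall>x\<in>l2. S (s + t) x = S s (S t x)) \<and>
     (\<forall>x\<in>l2. ((\<lambda>t. l2_norm (vsub (S t x) x)) \<longlongrightarrow> 0) (at_right 0))"

definition semigroup_generator_l2 ::
  "(real \<Rightarrow> 'i vec \<Rightarrow> 'i vec) \<Rightarrow> 'i vec set \<Rightarrow> ('i vec \<Rightarrow> 'i vec) \<Rightarrow> bool" where
  "semigroup_generator_l2 S DG G \<longleftrightarrow>
     DG = {x\<in>l2. \<exists>y\<in>l2.
            ((\<lambda>t. l2_norm (vsub (vscale (1 / complex_of_real t) (vsub (S t x) x)) y))
               \<longlongrightarrow> 0) (at_right 0)} \<and>
     (\<forall>x\<in>DG. G x \<in> l2 \<and>
        ((\<lambda>t. l2_norm (vsub (vscale (1 / complex_of_real t) (vsub (S t x) x)) (G x)))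
           \<longlongrightarrow> 0) (at_right 0))"

text \<open>The rank one operator |a><b|, i.e. x maps to <b,x> a.\<close>
definition rank1 :: "'i vec \<Rightarrow> 'i vec \<Rightarrow> 'i mat" where
  "rank1 a b = (\<lambda>i j. a i * cnj (b j))"

definition madd :: "'i mat \<Rightarrow> 'i mat \<Rightarrow> 'i mat" where
  "madd A B = (\<lambda>i j. A i j + B i j)"

definition msub :: "'i mat \<Rightarrow> 'i mat \<Rightarrow> 'i mat" where
  "msub A B = (\<lambda>i j. A i j - B i j)"

definition mscale :: "complex \<Rightarrow> 'i mat \<Rightarrow> 'i mat" where
  "mscale c A = (\<lambda>i j. c * A i j)"

definition mzero :: "'i mat" where
  "mzero = (\<lambda>i j. 0)"

definition msum :: "(nat \<Rightarrow> 'i mat) \<Rightarrow> nat \<Rightarrow> 'i mat" where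
  "msum A n = (\<lambda>i j. \<Sum>k<n. A k i j)"

definition nuclear_rep :: "'i mat \<Rightarrow> (nat \<Rightarrow> 'i vec) \<Rightarrow> (nat \<Rightarrow> 'i vec) \<Rightarrow> bool" where
  "nuclear_rep T a b \<longleftrightarrow>
     (\<forall>n. a n \<in> l2 \<and> b n \<in> l2) \<and>
     summable (\<lambda>n. l2_norm (a n) * l2_norm (b n)) \<and>
     (\<forall>i j. (\<lambda>n. a n i * cnj (b n j)) sums T i j)"

definition trace_class :: "'i mat set" where
  "trace_class = {T. \<exists>a b. nuclear_rep T a b}"

text \<open>Trace norm (on a Hilbert space it coincides with the nuclear norm).\<close>
definition trace_norm :: "'i mat \<Rightarrow> real" where
  "trace_norm T = Inf {(\<Sum>n. l2_norm (a n) * l2_norm (b n)) | a b. nuclear_rep T a b}"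

definition mtrace :: "'i mat \<Rightarrow> complex" where
  "mtrace T = (\<Sum>\<^sub>\<infinity>i. T i i)"

definition qform :: "'i vec \<Rightarrow> 'i mat \<Rightarrow> 'i vec \<Rightarrow> complex" where
  "qform x T y = (\<Sum>\<^sub>\<infinity>i. cnj (x i) * (\<Sum>\<^sub>\<infinity>j. T i j * y j))"

text \<open>Positivity of the n x n block operator matrix [rho a b] of trace class operators,
  i.e. of an element of M_n(C) tensor T(H).\<close>
definition block_pos :: "nat \<Rightarrow> (nat \<Rightarrow> nat \<Rightarrow> 'i mat) \<Rightarrow> bool" where
  "block_pos n \<rho> \<longleftrightarrow>
     (\<forall>a<n. \<forall>b<n. \<rho> a b \<in> trace_class) \<and>
     (\<forall>x. (\<forall>a<n. x a \<in> l2) \<longrightarrow>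
        Im (\<Sum>a<n. \<Sum>b<n. qform (x a) (\<rho> a b) (x b)) = 0 \<and>
        0 \<le> Re (\<Sum>a<n. \<Sum>b<n. qform (x a) (\<rho> a b) (x b)))"

definition tc_bounded_linear :: "('i mat \<Rightarrow> 'i mat) \<Rightarrow> bool" where
  "tc_bounded_linear \<Phi> \<longleftrightarrow>
     (\<forall>\<rho>\<in>trace_class. \<Phi> \<rho> \<in> trace_class) \<and>
     (\<forall>\<rho>\<in>trace_class. \<forall>\<sigma>\<in>trace_class. \<Phi> (madd \<rho> \<sigma>) = madd (\<Phi> \<rho>) (\<Phi> \<sigma>)) \<and>
     (\<forall>c. \<forall>\<rho>\<in>trace_class. \<Phi> (mscale c \<rho>) = mscale c (\<Phi> \<rho>)) \<and>
     (\<exists>C. \<forall>\<rho>\<in>trace_class. trace_norm (\<Phi> \<rho>) \<le> C * trace_norm \<rho>)"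

definition completely_positive :: "('i mat \<Rightarrow> 'i mat) \<Rightarrow> bool" where
  "completely_positive \<Phi> \<longleftrightarrow>
     (\<forall>n \<rho>. block_pos n \<rho> \<longrightarrow> block_pos n (\<lambda>a b. \<Phi> (\<rho> a b)))"

definition trace_preserving_qds :: "(real \<Rightarrow> 'i mat \<Rightarrow> 'i mat) \<Rightarrow> bool" where
  "trace_preserving_qds T \<longleftrightarrow>
     (\<forall>t\<ge>0. tc_bounded_linear (T t) \<and> completely_positive (T t) \<and>
             (\<forall>\<rho>\<in>trace_class. mtrace (T t \<rho>) = mtrace \<rho>)) \<and>
     (\<forall>\<rho>\<in>trace_class. T 0 \<rho> = \<rho>) \<and>
     (\<forall>s\<ge>0. \<forall>t\<ge>0. \<forall>\<rho>\<in>trace_class. T (s + t) \<rho> = T s (T t \<rho>)) \<and>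
     (\<forall>\<rho>\<in>trace_class. ((\<lambda>t. trace_norm (msub (T t \<rho>) \<rho>)) \<longlongrightarrow> 0) (at_right 0))"

definition qds_generator ::
  "(real \<Rightarrow> 'i mat \<Rightarrow> 'i mat) \<Rightarrow> 'i mat set \<Rightarrow> ('i mat \<Rightarrow> 'i mat) \<Rightarrow> bool" where
  "qds_generator T D L \<longleftrightarrow>
     D = {\<rho>\<in>trace_class. \<exists>\<sigma>\<in>trace_class.
            ((\<lambda>t. trace_norm (msub (mscale (1 / complex_of_real t) (msub (T t \<rho>) \<rho>)) \<sigma>))
               \<longlongrightarrow> 0) (at_right 0)} \<and>
     (\<forall>\<rho>\<in>D. L \<rho> \<in> trace_class \<and>
        ((\<lambda>t. trace_norm (msub (mscale (1 / complex_of_real t) (msub (T t \<rho>) \<rho>)) (L \<rho>)))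
           \<longlongrightarrow> 0) (at_right 0))"

definition D0 :: "'i vec set \<Rightarrow> 'i mat set" where
  "D0 DM = {msum (\<lambda>k. rank1 (a k) (b k)) n | n a b. \<forall>k<n. a k \<in> DM \<and> b k \<in> DM}"

text \<open>Generalized standard form of the generator L (domain D) with operators
  M (domain DM) and L_k (k ranging over nat; finitely many operators are covered by
  taking the remaining ones to be zero).\<close>
definition gen_standard_form ::
  "'i mat set \<Rightarrow> ('i mat \<Rightarrow> 'i mat) \<Rightarrow> 'i vec set \<Rightarrow> ('i vec \<Rightarrow> 'i vec) \<Rightarrow>
   (nat \<Rightarrow> 'i vec \<Rightarrow> 'i vec) \<Rightarrow> bool" where
  "gen_standard_form D L DM M Lk \<longleftrightarrow>
     \<comment> \<open>M is a densely defined closed linear operator generating a semigroup on H\<close>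
     linear_on_l2 DM M \<and>
     (\<forall>x\<in>l2. \<forall>\<epsilon>>0. \<exists>y\<in>DM. l2_norm (vsub x y) < \<epsilon>) \<and>
     (\<forall>xs x y. (\<forall>n. xs n \<in> DM) \<and> x \<in> l2 \<and> y \<in> l2 \<and>
        (\<lambda>n. l2_norm (vsub (xs n) x)) \<longlonglongrightarrow> 0 \<and>
        (\<lambda>n. l2_norm (vsub (M (xs n)) y)) \<longlonglongrightarrow> 0 \<longrightarrow> x \<in> DM \<and> M x = y) \<and>
     (\<exists>S. c0_semigroup_l2 S \<and> semigroup_generator_l2 S DM (\<lambda>x. vscale (-1) (M x))) \<and>
     \<comment> \<open>the L_k are linear and relatively bounded with respect to M\<close>
     (\<forall>k. linear_on_l2 DM (Lk k) \<and>
          (\<exists>a b. \<forall>x\<in>DM. l2_norm (Lk k x) \<le> a * l2_norm x + b * l2_norm (M x))) \<and>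
     \<comment> \<open>action of L on |phi><psi|; the series converges in trace norm\<close>
     (\<forall>\<phi>\<in>DM. \<forall>\<psi>\<in>DM. rank1 \<phi> \<psi> \<in> D \<and>
        (\<lambda>n. trace_norm (msub (msum (\<lambda>k. rank1 (Lk k \<phi>) (Lk k \<psi>)) n)
                (madd (madd (L (rank1 \<phi> \<psi>)) (rank1 (M \<phi>) \<psi>)) (rank1 \<phi> (M \<psi>)))))
          \<longlonglongrightarrow> 0) \<and>
     \<comment> \<open>D(L) is the graph norm closure of D_0 (D_0 is a subset of D by the above)\<close>
     (\<forall>\<rho>\<in>D. \<exists>s. (\<forall>n. s n \<in> D0 DM) \<and>
        (\<lambda>n. trace_norm (msub (s n) \<rho>) + trace_norm (msub (L (s n)) (L \<rho>))) \<longlonglongrightarrow> 0) \<and>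
     \<comment> \<open>normalisation\<close>
     (\<forall>\<phi>\<in>DM. (\<lambda>k. complex_of_real ((l2_norm (Lk k \<phi>))\<^sup>2))
                 sums (l2_inner \<phi> (M \<phi>) + l2_inner (M \<phi>) \<phi>))"

definition Mcal :: "('i vec \<Rightarrow> 'i vec) \<Rightarrow> 'i vec \<Rightarrow> 'i vec \<Rightarrow> 'i mat" where
  "Mcal M \<phi> \<psi> = madd (rank1 (M \<phi>) \<psi>) (rank1 \<phi> (M \<psi>))"

definition Lplus :: "('i mat \<Rightarrow> 'i mat) \<Rightarrow> ('i vec \<Rightarrow> 'i vec) \<Rightarrow> 'i vec \<Rightarrow> 'i vec \<Rightarrow> 'i mat" where
  "Lplus L M \<phi> \<psi> = madd (L (rank1 \<phi> \<psi>)) (Mcal M \<phi> \<psi>)"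

end

theory Submission
  imports Defs
begin

lemma l2_norm_nonneg: "0 \<le> l2_norm x"
  unfolding l2_norm_def by (simp add: infsum_nonneg)

lemma zero_l2: "(\<lambda>i. 0) \<in> l2" and l2_norm_zero: "l2_norm (\<lambda>i. 0) = 0"
  unfolding l2_def l2_norm_def by auto

lemma l2_sumF: "x \<in> l2 \<Longrightarrow> finite F \<Longrightarrow> (\<Sum>i\<in>F. (cmod (x i))\<^sup>2) \<le> (l2_norm x)\<^sup>2"
  unfolding l2_def l2_norm_def
  by (subst real_sqrt_pow2) (auto intro!: finite_sum_le_infsum infsum_nonneg)

lemma L2_set_le: "x \<in> l2 \<Longrightarrow> finite F \<Longrightarrow> L2_set (\<lambda>i. cmod (x i)) F \<le> l2_norm x"
  unfolding L2_set_def using real_sqrt_le_mono[OF l2_sumF[of x F]] l2_norm_nonneg[of x]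
  by simp

lemma sqbound: "((a::real) + b)\<^sup>2 \<le> 2 * a\<^sup>2 + 2 * b\<^sup>2"
proof -
  have "0 \<le> (a - b)\<^sup>2" by simp
  then show ?thesis by (simp add: power2_eq_square algebra_simps)
qed

lemma prodbound: "0 \<le> (a::real) \<Longrightarrow> 0 \<le> b \<Longrightarrow> a * b \<le> a\<^sup>2 + b\<^sup>2"
proof -
  assume "0 \<le> a" "0 \<le> b"
  have "0 \<le> (a - b)\<^sup>2" by simp
  moreover have "0 \<le> a * b" using \<open>0 \<le> a\<close> \<open>0 \<le> b\<close> by simp
  ultimately show ?thesis by (simp add: power2_eq_square algebra_simps)
qed

lemma vadd_l2: assumes "x \<in> l2" "y \<in> l2" shows "vadd x y \<in> l2"
proof -
  have s: "(\<lambda>i. 2 * (cmod (x i))\<^sup>2 + 2 * (cmod (y i))\<^sup>2) summable_on UNIV"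
    using assms unfolding l2_def by (intro summable_on_add summable_on_cmult_right) auto
  have "(cmod (x i + y i))\<^sup>2 \<le> 2 * (cmod (x i))\<^sup>2 + 2 * (cmod (y i))\<^sup>2" for i
  proof -
    have "cmod (x i + y i) \<le> cmod (x i) + cmod (y i)" by (rule norm_triangle_ineq)
    hence "(cmod (x i + y i))\<^sup>2 \<le> (cmod (x i) + cmod (y i))\<^sup>2" by (simp add: power_mono)
    also have "\<dots> \<le> 2 * (cmod (x i))\<^sup>2 + 2 * (cmod (y i))\<^sup>2"
      using sqbound by blast
    finally show ?thesis .
  qed
  then have "(\<lambda>i. (cmod (x i + y i))\<^sup>2) summable_on UNIV"
    by (intro summable_on_comparison_test[OF s]) auto
  then show ?thesis unfolding l2_def vadd_def by simp
qed

lemma vscale_l2: assumes "x \<in> l2" shows "vscale c x \<in> l2"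
proof -
  have "(\<lambda>i. (cmod c)\<^sup>2 * (cmod (x i))\<^sup>2) summable_on UNIV"
    using assms unfolding l2_def by (intro summable_on_cmult_right) auto
  then show ?thesis unfolding l2_def vscale_def by (simp add: norm_mult power_mult_distrib)
qed

lemma vsub_l2: "x \<in> l2 \<Longrightarrow> y \<in> l2 \<Longrightarrow> vsub x y \<in> l2"
proof -
  assume a: "x \<in> l2" "y \<in> l2"
  have "vsub x y = vadd x (vscale (-1) y)" unfolding vsub_def vadd_def vscale_def by auto
  then show ?thesis using a vadd_l2 vscale_l2 by metis
qed

lemma l2_norm_le: assumes "x \<in> l2" "0 \<le> B" "\<And>F. finite F \<Longrightarrow> L2_set (\<lambda>i. cmod (x i)) F \<le> B"
  shows "l2_norm x \<le> B"
proof -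
  have "(\<Sum>\<^sub>\<infinity>i. (cmod (x i))\<^sup>2) \<le> B\<^sup>2"
  proof (rule infsum_le_finite_sums)
    show "(\<lambda>i. (cmod (x i))\<^sup>2) summable_on UNIV" using assms(1) unfolding l2_def by auto
    fix F :: "'a set" assume "finite F"
    hence "sqrt (\<Sum>i\<in>F. (cmod (x i))\<^sup>2) \<le> B" using assms(3) unfolding L2_set_def by auto
    then show "(\<Sum>i\<in>F. (cmod (x i))\<^sup>2) \<le> B\<^sup>2"
    proof -
      have "0 \<le> (\<Sum>i\<in>F. (cmod (x i))\<^sup>2)" by (simp add: sum_nonneg)
      hence "(\<Sum>i\<in>F. (cmod (x i))\<^sup>2) = (sqrt (\<Sum>i\<in>F. (cmod (x i))\<^sup>2))\<^sup>2" by simp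
      also have "\<dots> \<le> B\<^sup>2" using \<open>sqrt _ \<le> B\<close> by (intro power_mono) (auto simp: sum_nonneg)
      finally show ?thesis .
    qed
  qed
  then show ?thesis unfolding l2_norm_def using assms(2) by (simp add: real_sqrt_le_iff real_le_lsqrt)
qed

lemma l2_triangle: assumes "x \<in> l2" "y \<in> l2" shows "l2_norm (vadd x y) \<le> l2_norm x + l2_norm y"
proof (rule l2_norm_le[OF vadd_l2[OF assms]])
  show "0 \<le> l2_norm x + l2_norm y" by (simp add: l2_norm_nonneg add_nonneg_nonneg)
  fix F :: "'a set" assume F: "finite F"
  have "L2_set (\<lambda>i. cmod (vadd x y i)) F \<le> L2_set (\<lambda>i. cmod (x i) + cmod (y i)) F"
    unfolding L2_set_def vadd_def
    by (intro real_sqrt_le_mono sum_mono power_mono norm_triangle_ineq) auto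
  also have "\<dots> \<le> L2_set (\<lambda>i. cmod (x i)) F + L2_set (\<lambda>i. cmod (y i)) F"
    by (rule L2_set_triangle_ineq)
  also have "\<dots> \<le> l2_norm x + l2_norm y" using L2_set_le[OF assms(1) F] L2_set_le[OF assms(2) F] by simp
  finally show "L2_set (\<lambda>i. cmod (vadd x y i)) F \<le> l2_norm x + l2_norm y" .
qed

lemma l2_norm_neg: "l2_norm (vscale (-1) x) = l2_norm x"
  unfolding l2_norm_def vscale_def by simp

lemma l2_triangle_sub: assumes "x \<in> l2" "y \<in> l2" shows "l2_norm (vsub x y) \<le> l2_norm x + l2_norm y"
proof -
  have "vsub x y = vadd x (vscale (-1) y)" unfolding vsub_def vadd_def vscale_def by auto
  then show ?thesis using l2_triangle[OF assms(1) vscale_l2[OF assms(2)]] l2_norm_neg by metis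
qed

lemma l2_norm_rev: assumes "x \<in> l2" "y \<in> l2" shows "l2_norm y \<le> l2_norm x + l2_norm (vsub x y)"
proof -
  have "y = vsub x (vsub x y)" unfolding vsub_def by auto
  then show ?thesis using l2_triangle_sub[OF assms(1) vsub_l2[OF assms]] by metis
qed

lemma l2_CS: assumes "x \<in> l2" "y \<in> l2" shows "cmod (l2_inner x y) \<le> l2_norm x * l2_norm y"
proof -
  have ab: "(\<lambda>i. norm (cnj (x i) * y i)) summable_on UNIV"
  proof -
    have s: "(\<lambda>i. (cmod (x i))\<^sup>2 + (cmod (y i))\<^sup>2) summable_on UNIV"
      using assms unfolding l2_def by (intro summable_on_add) auto
    have "norm (cnj (x i) * y i) \<le> (cmod (x i))\<^sup>2 + (cmod (y i))\<^sup>2" for i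
      by (simp add: norm_mult prodbound)
    then show ?thesis by (intro summable_on_comparison_test[OF s]) auto
  qed
  have "cmod (l2_inner x y) \<le> (\<Sum>\<^sub>\<infinity>i. norm (cnj (x i) * y i))"
    unfolding l2_inner_def by (rule norm_infsum_bound[OF ab])
  also have "\<dots> \<le> l2_norm x * l2_norm y"
  proof (rule infsum_le_finite_sums[OF ab])
    fix F :: "'a set" assume F: "finite F"
    have "(\<Sum>i\<in>F. norm (cnj (x i) * y i)) = (\<Sum>i\<in>F. \<bar>cmod (x i)\<bar> * \<bar>cmod (y i)\<bar>)"
      by (simp add: norm_mult)
    also have "\<dots> \<le> L2_set (\<lambda>i. cmod (x i)) F * L2_set (\<lambda>i. cmod (y i)) F"
      by (rule L2_set_mult_ineq)
    also have "\<dots> \<le> l2_norm x * l2_norm y"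
      by (intro mult_mono L2_set_le assms F l2_norm_nonneg L2_set_nonneg)
    finally show "(\<Sum>i\<in>F. norm (cnj (x i) * y i)) \<le> l2_norm x * l2_norm y" .
  qed
  finally show ?thesis .
qed


definition nrep :: "'i mat \<Rightarrow> real \<Rightarrow> bool" where
  "nrep A s \<longleftrightarrow> (\<exists>a b. nuclear_rep A a b \<and> (\<lambda>n. l2_norm (a n) * l2_norm (b n)) sums s)"

definition mneg :: "'i mat \<Rightarrow> 'i mat" where "mneg A = (\<lambda>i j. - A i j)"

lemma tn_set_bdd: "bdd_below {(\<Sum>n. l2_norm (a n) * l2_norm (b n)) | a b. nuclear_rep A a b}"
  unfolding bdd_below_def nuclear_rep_def
  by (rule exI[of _ 0]) (auto intro!: suminf_nonneg mult_nonneg_nonneg l2_norm_nonneg)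

lemma nrep_tn: "nrep A s \<Longrightarrow> trace_norm A \<le> s"
  unfolding nrep_def trace_norm_def
  by (auto intro!: cInf_lower[OF _ tn_set_bdd] dest: sums_unique)

lemma nrep_tc: "nrep A s \<Longrightarrow> A \<in> trace_class"
  unfolding nrep_def trace_class_def by auto

lemma tc_nrep: "A \<in> trace_class \<Longrightarrow> \<exists>s. nrep A s"
  unfolding nrep_def trace_class_def nuclear_rep_def by (auto dest: summable_sums)

lemma tc_approx: assumes "A \<in> trace_class" "0 < d" shows "\<exists>s. nrep A s \<and> s < trace_norm A + d"
proof -
  let ?X = "{(\<Sum>n. l2_norm (a n) * l2_norm (b n)) | a b. nuclear_rep A a b}"
  have ne: "?X \<noteq> {}" using assms(1) unfolding trace_class_def by auto
  have "Inf ?X < trace_norm A + d" using assms(2) unfolding trace_norm_def by simp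
  then obtain x where "x \<in> ?X" "x < trace_norm A + d" using cInf_less_iff[OF ne tn_set_bdd] by blast
  then obtain a b where "nuclear_rep A a b" "x = (\<Sum>n. l2_norm (a n) * l2_norm (b n))" by blast
  then have "nrep A x" unfolding nrep_def nuclear_rep_def by (auto dest: summable_sums)
  then show ?thesis using \<open>x < _\<close> by blast
qed

lemma csums_if:
  fixes f g :: "nat \<Rightarrow> complex"
  assumes "g sums x" and "f sums y"
  shows "(\<lambda> n. if even n then f (n div 2) else g ((n - 1) div 2)) sums (x + y)"
proof -
  have r: "(\<lambda>n. Re (if even n then f (n div 2) else g ((n - 1) div 2))) =
      (\<lambda>n. if even n then Re (f (n div 2)) else Re (g ((n - 1) div 2)))" by auto
  have i: "(\<lambda>n. Im (if even n then f (n div 2) else g ((n - 1) div 2))) =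
      (\<lambda>n. if even n then Im (f (n div 2)) else Im (g ((n - 1) div 2)))" by auto
  show ?thesis using assms unfolding sums_complex_iff r i
    by (auto intro: sums_if[of "\<lambda>n. Re (g n)" _ "\<lambda>n. Re (f n)", simplified]
                    sums_if[of "\<lambda>n. Im (g n)" _ "\<lambda>n. Im (f n)", simplified])
qed

lemma nrep_add: assumes "nrep A s" "nrep B t" shows "nrep (madd A B) (s + t)"
proof -
  obtain a b where ab: "nuclear_rep A a b" "(\<lambda>n. l2_norm (a n) * l2_norm (b n)) sums s"
    using assms(1) unfolding nrep_def by blast
  obtain c d where cd: "nuclear_rep B c d" "(\<lambda>n. l2_norm (c n) * l2_norm (d n)) sums t"
    using assms(2) unfolding nrep_def by blast
  define a' where "a' = (\<lambda>n. if even n then a (n div 2) else c ((n - 1) div 2))"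
  define b' where "b' = (\<lambda>n. if even n then b (n div 2) else d ((n - 1) div 2))"
  have e1: "(\<lambda>n. l2_norm (a' n) * l2_norm (b' n)) = (\<lambda>n. if even n then l2_norm (a (n div 2)) * l2_norm (b (n div 2))
       else l2_norm (c ((n - 1) div 2)) * l2_norm (d ((n - 1) div 2)))"
    unfolding a'_def b'_def by auto
  have s: "(\<lambda>n. l2_norm (a' n) * l2_norm (b' n)) sums (s + t)"
    unfolding e1 using sums_if[OF cd(2) ab(2)] by (simp add: add.commute)
  have "nuclear_rep (madd A B) a' b'"
    unfolding nuclear_rep_def
  proof (intro conjI allI)
    fix n show "a' n \<in> l2" using ab(1) cd(1) unfolding a'_def b'_def nuclear_rep_def by auto
  next
    fix n show "b' n \<in> l2" using ab(1) cd(1) unfolding a'_def b'_def nuclear_rep_def by auto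
  next
    show "summable (\<lambda>n. l2_norm (a' n) * l2_norm (b' n))" using s by (rule sums_summable)
  next
    fix i j
    have e2: "(\<lambda>n. a' n i * cnj (b' n j)) = (\<lambda>n. if even n then a (n div 2) i * cnj (b (n div 2) j)
       else c ((n - 1) div 2) i * cnj (d ((n - 1) div 2) j))"
      unfolding a'_def b'_def by auto
    have "(\<lambda>n. a n i * cnj (b n j)) sums A i j" "(\<lambda>n. c n i * cnj (d n j)) sums B i j"
      using ab(1) cd(1) unfolding nuclear_rep_def by auto
    from csums_if[OF this(2) this(1)]
    show "(\<lambda>n. a' n i * cnj (b' n j)) sums madd A B i j"
      unfolding e2 madd_def by (simp add: add.commute)
  qed
  then show ?thesis using s unfolding nrep_def by blast
qed

lemma nrep_neg: assumes "nrep A s" shows "nrep (mneg A) s"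
proof -
  obtain a b where ab: "nuclear_rep A a b" "(\<lambda>n. l2_norm (a n) * l2_norm (b n)) sums s"
    using assms(1) unfolding nrep_def by blast
  have l: "\<forall>n. vscale (-1) (a n) \<in> l2 \<and> b n \<in> l2" using ab(1) unfolding nuclear_rep_def by (auto simp: vscale_l2)
  have e: "(\<lambda>n. l2_norm (vscale (-1) (a n)) * l2_norm (b n)) = (\<lambda>n. l2_norm (a n) * l2_norm (b n))"
    by (simp add: l2_norm_neg)
  have "(\<lambda>n. vscale (-1) (a n) i * cnj (b n j)) sums mneg A i j" for i j
  proof -
    have "(\<lambda>n. a n i * cnj (b n j)) sums A i j" using ab(1) unfolding nuclear_rep_def by auto
    from sums_minus[OF this] show ?thesis unfolding mneg_def vscale_def by simp
  qed
  then have "nuclear_rep (mneg A) (\<lambda>n. vscale (-1) (a n)) b"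
    using l ab(2) e unfolding nuclear_rep_def by (auto dest: sums_summable)
  then show ?thesis using ab(2) e unfolding nrep_def by metis
qed

lemma nrep_rank1: assumes "a \<in> l2" "b \<in> l2" shows "nrep (rank1 a b) (l2_norm a * l2_norm b)"
proof -
  define a' where "a' = (\<lambda>n::nat. if n = 0 then a else (\<lambda>i. 0))"
  define b' where "b' = (\<lambda>n::nat. if n = 0 then b else (\<lambda>i. 0))"
  have e1: "(\<lambda>n. l2_norm (a' n) * l2_norm (b' n)) = (\<lambda>n. if n = 0 then l2_norm a * l2_norm b else 0)"
    unfolding a'_def b'_def by (auto simp: l2_norm_zero)
  have e2: "(\<lambda>n. a' n i * cnj (b' n j)) = (\<lambda>n. if n = 0 then a i * cnj (b j) else 0)" for i j
    unfolding a'_def b'_def by auto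
  have "nuclear_rep (rank1 a b) a' b'"
    unfolding nuclear_rep_def e1 e2 rank1_def
    using assms zero_l2 sums_single[of 0 "\<lambda>_. l2_norm a * l2_norm b"] sums_single[of 0 "\<lambda>_. a _ * cnj (b _)"]
    by (auto simp: a'_def b'_def sums_summable)
  then show ?thesis unfolding nrep_def
    by (intro exI[of _ a'] exI[of _ b']) (simp add: e1 sums_single[of 0 "\<lambda>_. l2_norm a * l2_norm b", simplified])
qed

lemma nrep_zero: "nrep (\<lambda>i j. 0) 0"
  unfolding nrep_def nuclear_rep_def
  by (rule exI[of _ "\<lambda>n i. 0"], rule exI[of _ "\<lambda>n i. 0"]) (auto simp: zero_l2 l2_norm_zero)

lemma nrep_msum: assumes "\<forall>k<n. a k \<in> l2 \<and> b k \<in> l2"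
  shows "nrep (msum (\<lambda>k. rank1 (a k) (b k)) n) (\<Sum>k<n. l2_norm (a k) * l2_norm (b k))"
  using assms
proof (induction n)
  case 0
  then show ?case using nrep_zero by (simp add: msum_def)
next
  case (Suc n)
  have "msum (\<lambda>k. rank1 (a k) (b k)) (Suc n) = madd (msum (\<lambda>k. rank1 (a k) (b k)) n) (rank1 (a n) (b n))"
    unfolding msum_def madd_def by auto
  moreover have "nrep (msum (\<lambda>k. rank1 (a k) (b k)) n) (\<Sum>k<n. l2_norm (a k) * l2_norm (b k))"
    using Suc by auto
  ultimately show ?case using nrep_add[OF _ nrep_rank1[of "a n" "b n"]] Suc.prems by simp
qed

lemma tn_add: assumes "A \<in> trace_class" "B \<in> trace_class"
  shows "trace_norm (madd A B) \<le> trace_norm A + trace_norm B"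
proof (rule field_le_epsilon)
  fix d :: real assume "0 < d"
  have d2: "0 < d/2" using \<open>0 < d\<close> by simp
  obtain s where s: "nrep A s" "s < trace_norm A + d/2" using tc_approx[OF assms(1) d2] by blast
  obtain t where t: "nrep B t" "t < trace_norm B + d/2" using tc_approx[OF assms(2) d2] by blast
  have "trace_norm (madd A B) \<le> s + t" by (rule nrep_tn[OF nrep_add[OF s(1) t(1)]])
  then show "trace_norm (madd A B) \<le> trace_norm A + trace_norm B + d" using s t by simp
qed

lemma tn_neg: assumes "A \<in> trace_class" shows "trace_norm (mneg A) \<le> trace_norm A"
proof (rule field_le_epsilon)
  fix d :: real assume "0 < d"
  obtain s where s: "nrep A s" "s < trace_norm A + d" using tc_approx[OF assms(1) \<open>0 < d\<close>] by blast
  then show "trace_norm (mneg A) \<le> trace_norm A + d" using nrep_tn[OF nrep_neg[OF s(1)]] by simp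
qed

lemma tc_add: "A \<in> trace_class \<Longrightarrow> B \<in> trace_class \<Longrightarrow> madd A B \<in> trace_class"
  by (meson nrep_add nrep_tc tc_nrep)

lemma tc_neg: "A \<in> trace_class \<Longrightarrow> mneg A \<in> trace_class"
  by (meson nrep_neg nrep_tc tc_nrep)

lemma msub_eq: "msub A B = madd A (mneg B)"
  unfolding msub_def madd_def mneg_def by auto

lemma tc_sub: "A \<in> trace_class \<Longrightarrow> B \<in> trace_class \<Longrightarrow> msub A B \<in> trace_class"
  by (simp add: msub_eq tc_add tc_neg)


lemma lin_vsub: assumes "linear_on_l2 D A" "x \<in> D" "y \<in> D"
  shows "vsub x y \<in> D" "A (vsub x y) = vsub (A x) (A y)"
proof -
  have e: "vsub x y = vadd x (vscale (-1) y)" "vsub (A x) (A y) = vadd (A x) (vscale (-1) (A y))"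
    unfolding vsub_def vadd_def vscale_def by auto
  show "vsub x y \<in> D" "A (vsub x y) = vsub (A x) (A y)" using assms unfolding e linear_on_l2_def by auto
qed

lemma sqrt_bound:
  fixes p q a b \<epsilon> :: real
  assumes "0 \<le> p" "p \<le> 2 * \<epsilon>\<^sup>2" "0 \<le> q" "q \<le> 2 * (a * b)" "0 \<le> a" "0 \<le> b" "0 \<le> \<epsilon>"
  shows "sqrt p * sqrt q \<le> \<epsilon> * (a + b)"
proof -
  have "p * q \<le> (2 * \<epsilon>\<^sup>2) * (2 * (a * b))" using assms by (intro mult_mono) auto
  also have "\<dots> \<le> (\<epsilon> * (a + b))\<^sup>2"
  proof -
    have "0 \<le> \<epsilon>\<^sup>2 * (a - b)\<^sup>2" by simp
    then show ?thesis by (simp add: power2_eq_square algebra_simps)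
  qed
  finally have "sqrt (p * q) \<le> sqrt ((\<epsilon> * (a + b))\<^sup>2)" by (rule real_sqrt_le_mono)
  then show ?thesis using assms by (simp add: real_sqrt_mult)
qed

lemma partial_bound:
  assumes lin: "linear_on_l2 DM M" and x: "x \<in> DM"
    and ns: "(\<lambda>k. complex_of_real ((l2_norm (Lk k x))\<^sup>2)) sums (l2_inner x (M x) + l2_inner (M x) x)"
  shows "(\<Sum>k<n. (l2_norm (Lk k x))\<^sup>2) \<le> 2 * (l2_norm x * l2_norm (M x))"
proof -
  let ?c = "l2_inner x (M x) + l2_inner (M x) x"
  have xl: "x \<in> l2" "M x \<in> l2" using lin x unfolding linear_on_l2_def by auto
  have "(\<lambda>k. (l2_norm (Lk k x))\<^sup>2) sums Re ?c" using ns unfolding sums_complex_iff by simp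
  then have "(\<Sum>k<n. (l2_norm (Lk k x))\<^sup>2) \<le> Re ?c"
    using sum_le_suminf[of "\<lambda>k. (l2_norm (Lk k x))\<^sup>2" "{..<n}"] by (auto simp: sums_iff)
  also have "\<dots> \<le> cmod ?c" by (rule complex_Re_le_cmod)
  also have "\<dots> \<le> cmod (l2_inner x (M x)) + cmod (l2_inner (M x) x)" by (rule norm_triangle_ineq)
  also have "\<dots> \<le> 2 * (l2_norm x * l2_norm (M x))"
    using l2_CS[OF xl] l2_CS[OF xl(2) xl(1)] mult.commute[of "l2_norm (M x)" "l2_norm x"] by linarith
  finally show ?thesis .
qed

lemma CS_partial:
  "(\<Sum>k<n. f k * g k) \<le> sqrt (\<Sum>k<n. (f k)\<^sup>2) * sqrt (\<Sum>k<n. (g k)\<^sup>2)" if "\<And>k. 0 \<le> f k" "\<And>k. 0 \<le> g k"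
    for f g :: "nat \<Rightarrow> real"
  using L2_set_mult_ineq[of f g "{..<n}"] that unfolding L2_set_def by simp


theorem lemma3p8:
  fixes T :: "real \<Rightarrow> ('i::countable) mat \<Rightarrow> 'i mat"
    and D :: "'i mat set" and L :: "'i mat \<Rightarrow> 'i mat"
    and DM :: "'i vec set" and M :: "'i vec \<Rightarrow> 'i vec"
    and Lk :: "nat \<Rightarrow> 'i vec \<Rightarrow> 'i vec"
    and \<phi> \<psi> e f :: "'i vec" and \<epsilon> :: real
  assumes "trace_preserving_qds T"
    and "qds_generator T D L"
    and "gen_standard_form D L DM M Lk"
    and "\<phi> \<in> DM" and "\<psi> \<in> DM" and "e \<in> DM" and "f \<in> DM"
    and "0 \<le> \<epsilon>"
    and "l2_norm (vsub \<phi> e) \<le> \<epsilon>" and "l2_norm (vsub (M \<phi>) (M e)) \<le> \<epsilon>"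
    and "l2_norm (vsub \<psi> f) \<le> \<epsilon>" and "l2_norm (vsub (M \<psi>) (M f)) \<le> \<epsilon>"
  shows "trace_norm (msub (Mcal M \<phi> \<psi>) (Mcal M e f))
           \<le> \<epsilon> * (l2_norm \<phi> + l2_norm (M \<phi>) + l2_norm \<psi> + l2_norm (M \<psi>) + 2 * \<epsilon>)
         \<and> trace_norm (msub (Lplus L M \<phi> \<psi>) (Lplus L M e f))
           \<le> \<epsilon> * (l2_norm \<phi> + l2_norm (M \<phi>) + l2_norm \<psi> + l2_norm (M \<psi>) + 2 * \<epsilon>)"
proof -
  note gsf = assms(3)[unfolded gen_standard_form_def]
  have linM: "linear_on_l2 DM M" using gsf by blast
  have linL: "\<And>k. linear_on_l2 DM (Lk k)" using gsf by blast
  have act: "\<And>x y. x \<in> DM \<Longrightarrow> y \<in> DM \<Longrightarrow> rank1 x y \<in> D \<and>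
        (\<lambda>n. trace_norm (msub (msum (\<lambda>k. rank1 (Lk k x) (Lk k y)) n)
                (madd (madd (L (rank1 x y)) (rank1 (M x) y)) (rank1 x (M y)))))
          \<longlonglongrightarrow> 0" using gsf by blast
  have ns: "\<And>x. x \<in> DM \<Longrightarrow> (\<lambda>k. complex_of_real ((l2_norm (Lk k x))\<^sup>2))
                 sums (l2_inner x (M x) + l2_inner (M x) x)" using gsf by blast
  have LD: "\<And>\<rho>. \<rho> \<in> D \<Longrightarrow> L \<rho> \<in> trace_class" using assms(2) unfolding qds_generator_def by blast
  have inl2: "\<And>x. x \<in> DM \<Longrightarrow> x \<in> l2" "\<And>x. x \<in> DM \<Longrightarrow> M x \<in> l2" "\<And>x k. x \<in> DM \<Longrightarrow> Lk k x \<in> l2"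
    using linM linL unfolding linear_on_l2_def by blast+
  note dm = assms(4-7)
  note l2s = inl2(1)[OF assms(4)] inl2(1)[OF assms(5)] inl2(1)[OF assms(6)] inl2(1)[OF assms(7)]
    inl2(2)[OF assms(4)] inl2(2)[OF assms(5)] inl2(2)[OF assms(6)] inl2(2)[OF assms(7)]
  define a where "a = l2_norm \<phi>"
  define b where "b = l2_norm (M \<phi>)"
  define c where "c = l2_norm \<psi>"
  define d where "d = l2_norm (M \<psi>)"
  have nn: "0 \<le> a" "0 \<le> b" "0 \<le> c" "0 \<le> d" unfolding a_def b_def c_def d_def by (auto simp: l2_norm_nonneg)
  have ne: "l2_norm e \<le> a + \<epsilon>" using l2_norm_rev[of \<phi> e] l2s assms(9) unfolding a_def by simp
  have nMe: "l2_norm (M e) \<le> b + \<epsilon>" using l2_norm_rev[of "M \<phi>" "M e"] l2s assms(10) unfolding b_def by simp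
  define B where "B = \<epsilon> * (a + b + c + d + 2 * \<epsilon>)"
  have part1: "trace_norm (msub (Mcal M \<phi> \<psi>) (Mcal M e f)) \<le> B"
  proof -
    have eq1: "msub (Mcal M \<phi> \<psi>) (Mcal M e f) = madd (madd (rank1 (vsub (M \<phi>) (M e)) \<psi>) (rank1 (M e) (vsub \<psi> f)))
       (madd (rank1 (vsub \<phi> e) (M \<psi>)) (rank1 e (vsub (M \<psi>) (M f))))"
      by (auto simp: fun_eq_iff msub_def Mcal_def madd_def rank1_def vsub_def algebra_simps)
    let ?s = "l2_norm (vsub (M \<phi>) (M e)) * l2_norm \<psi> + l2_norm (M e) * l2_norm (vsub \<psi> f)
       + (l2_norm (vsub \<phi> e) * l2_norm (M \<psi>) + l2_norm e * l2_norm (vsub (M \<psi>) (M f)))"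
    have "nrep (msub (Mcal M \<phi> \<psi>) (Mcal M e f)) ?s"
      unfolding eq1 using l2s
      by (intro nrep_add nrep_rank1 vsub_l2) auto
    then have "trace_norm (msub (Mcal M \<phi> \<psi>) (Mcal M e f)) \<le> ?s" by (rule nrep_tn)
    also have "?s \<le> \<epsilon> * c + (b + \<epsilon>) * \<epsilon> + (\<epsilon> * d + (a + \<epsilon>) * \<epsilon>)"
      using assms(8-12) nn ne nMe unfolding c_def d_def
      by (intro add_mono mult_mono) (auto simp: l2_norm_nonneg)
    also have "\<dots> = B" unfolding B_def by (simp add: algebra_simps)
    finally show ?thesis .
  qed
  have part2: "trace_norm (msub (Lplus L M \<phi> \<psi>) (Lplus L M e f)) \<le> B"
  proof -
    define X where "X = madd (madd (L (rank1 \<phi> \<psi>)) (rank1 (M \<phi>) \<psi>)) (rank1 \<phi> (M \<psi>))"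
    define Y where "Y = madd (madd (L (rank1 e f)) (rank1 (M e) f)) (rank1 e (M f))"
    define S where "S = (\<lambda>n. msum (\<lambda>k. rank1 (Lk k \<phi>) (Lk k \<psi>)) n)"
    define R where "R = (\<lambda>n. msum (\<lambda>k. rank1 (Lk k e) (Lk k f)) n)"
    have LpX: "Lplus L M \<phi> \<psi> = X" "Lplus L M e f = Y"
      unfolding X_def Y_def Lplus_def Mcal_def madd_def by (auto simp: fun_eq_iff)
    have r1tc: "\<And>x y. x \<in> l2 \<Longrightarrow> y \<in> l2 \<Longrightarrow> rank1 x y \<in> trace_class"
      using nrep_rank1 nrep_tc by blast
    have tcX: "X \<in> trace_class" "Y \<in> trace_class"
      unfolding X_def Y_def using l2s act[OF assms(4,5)] act[OF assms(6,7)] LD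
      by (auto intro!: tc_add r1tc)
    have tcS: "\<And>n. S n \<in> trace_class" "\<And>n. R n \<in> trace_class"
      unfolding S_def R_def using inl2(3) dm by (auto intro!: nrep_tc[OF nrep_msum])
    have limS: "(\<lambda>n. trace_norm (msub (S n) X)) \<longlonglongrightarrow> 0" "(\<lambda>n. trace_norm (msub (R n) Y)) \<longlonglongrightarrow> 0"
      unfolding S_def R_def X_def Y_def using act[OF assms(4,5)] act[OF assms(6,7)] by auto
    have Lsub1: "\<And>k. Lk k (vsub \<phi> e) = vsub (Lk k \<phi>) (Lk k e)" using lin_vsub(2)[OF linL assms(4,6)] .
    have Lsub2: "\<And>k. Lk k (vsub \<psi> f) = vsub (Lk k \<psi>) (Lk k f)" using lin_vsub(2)[OF linL assms(5,7)] .
    have vdm: "vsub \<phi> e \<in> DM" "vsub \<psi> f \<in> DM" using lin_vsub(1)[OF linM] dm by auto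
    have bound: "trace_norm (msub X Y) \<le> B + (trace_norm (msub (S n) X) + trace_norm (msub (R n) Y))" for n
    proof -
      have eqA: "msub X Y = madd (madd (mneg (msub (S n) X)) (msub (S n) (R n))) (msub (R n) Y)"
        by (simp add: fun_eq_iff msub_def madd_def mneg_def)
      have eqB: "msub (S n) (R n) = madd (msum (\<lambda>k. rank1 (Lk k (vsub \<phi> e)) (Lk k \<psi>)) n)
             (msum (\<lambda>k. rank1 (Lk k e) (Lk k (vsub \<psi> f))) n)"
        unfolding Lsub1 Lsub2 S_def R_def
        by (simp add: fun_eq_iff msum_def msub_def madd_def rank1_def vsub_def
              sum_subtractf[symmetric] sum.distrib[symmetric] algebra_simps)
      let ?s1 = "\<Sum>k<n. l2_norm (Lk k (vsub \<phi> e)) * l2_norm (Lk k \<psi>)"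
      let ?s2 = "\<Sum>k<n. l2_norm (Lk k e) * l2_norm (Lk k (vsub \<psi> f))"
      have nr: "nrep (msub (S n) (R n)) (?s1 + ?s2)"
        unfolding eqB using inl2(3) dm vdm by (intro nrep_add nrep_msum) auto
      have MV: "l2_norm (M (vsub \<phi> e)) \<le> \<epsilon>" "l2_norm (M (vsub \<psi> f)) \<le> \<epsilon>"
        using lin_vsub(2)[OF linM assms(4,6)] lin_vsub(2)[OF linM assms(5,7)] assms(10,12) by auto
      have pb: "(\<Sum>k<n. (l2_norm (Lk k x))\<^sup>2) \<le> 2 * (l2_norm x * l2_norm (M x))" if "x \<in> DM" for x
        by (rule partial_bound[where Lk=Lk, OF linM that ns[OF that]])
      have eps2: "2 * (l2_norm (vsub \<phi> e) * l2_norm (M (vsub \<phi> e))) \<le> 2 * \<epsilon>\<^sup>2"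
           "2 * (l2_norm (vsub \<psi> f) * l2_norm (M (vsub \<psi> f))) \<le> 2 * \<epsilon>\<^sup>2"
        using MV assms(8,9,11) by (auto simp: power2_eq_square intro!: mult_mono l2_norm_nonneg)
      have "?s1 \<le> sqrt (\<Sum>k<n. (l2_norm (Lk k (vsub \<phi> e)))\<^sup>2) * sqrt (\<Sum>k<n. (l2_norm (Lk k \<psi>))\<^sup>2)"
        by (rule CS_partial) (auto simp: l2_norm_nonneg)
      also have "\<dots> \<le> \<epsilon> * (c + d)"
        using pb[OF vdm(1)] pb[OF assms(5)] eps2(1) nn assms(8) unfolding c_def d_def
        by (intro sqrt_bound) (auto intro!: sum_nonneg)
      finally have s1: "?s1 \<le> \<epsilon> * (c + d)" .
      have "?s2 \<le> sqrt (\<Sum>k<n. (l2_norm (Lk k e))\<^sup>2) * sqrt (\<Sum>k<n. (l2_norm (Lk k (vsub \<psi> f)))\<^sup>2)"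
        by (rule CS_partial) (auto simp: l2_norm_nonneg)
      also have "\<dots> = sqrt (\<Sum>k<n. (l2_norm (Lk k (vsub \<psi> f)))\<^sup>2) * sqrt (\<Sum>k<n. (l2_norm (Lk k e))\<^sup>2)"
        by simp
      also have "\<dots> \<le> \<epsilon> * (l2_norm e + l2_norm (M e))"
        using pb[OF vdm(2)] pb[OF assms(6)] eps2(2) assms(8)
        by (intro sqrt_bound) (auto intro!: sum_nonneg l2_norm_nonneg)
      also have "\<dots> \<le> \<epsilon> * (a + b + 2 * \<epsilon>)"
        using ne nMe assms(8) by (intro mult_left_mono) auto
      finally have s2: "?s2 \<le> \<epsilon> * (a + b + 2 * \<epsilon>)" .
      have tc1: "msub (S n) X \<in> trace_class" "msub (S n) (R n) \<in> trace_class" "msub (R n) Y \<in> trace_class"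
        using tcS tcX by (auto intro: tc_sub)
      have "trace_norm (msub X Y) \<le> trace_norm (madd (mneg (msub (S n) X)) (msub (S n) (R n))) + trace_norm (msub (R n) Y)"
        unfolding eqA using tc1 by (intro tn_add tc_add tc_neg) auto
      also have "\<dots> \<le> trace_norm (mneg (msub (S n) X)) + trace_norm (msub (S n) (R n)) + trace_norm (msub (R n) Y)"
        using tc1 by (intro add_right_mono tn_add tc_neg) auto
      also have "\<dots> \<le> trace_norm (msub (S n) X) + (?s1 + ?s2) + trace_norm (msub (R n) Y)"
        using tn_neg[OF tc1(1)] nrep_tn[OF nr] by linarith
      also have "\<dots> \<le> B + (trace_norm (msub (S n) X) + trace_norm (msub (R n) Y))"
        using s1 s2 unfolding B_def by (simp add: algebra_simps)
      finally show ?thesis .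
    qed
    have "(\<lambda>n. B + (trace_norm (msub (S n) X) + trace_norm (msub (R n) Y))) \<longlonglongrightarrow> B + (0 + 0)"
      by (intro tendsto_add tendsto_const limS)
    then have "trace_norm (msub X Y) \<le> B + (0 + 0)"
      by (rule tendsto_le[OF trivial_limit_sequentially _ tendsto_const]) (use bound in auto)
    then show ?thesis unfolding LpX by simp
  qed
  show ?thesis using part1 part2 unfolding B_def a_def b_def c_def d_def by (simp add: algebra_simps)
qed

end
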